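(* Let $m\in\mathbb{N}\setminus\{1\}$, let $0<p<q\leq\infty$ and put $\alpha=1/p-1/q$. For each $i\in\{1,\dots,m\}$ let $X_{i},Y_{i}$ be quasi-Banach spaces and $T_{i}:X_i\to Y_i$ a bounded linear operator. Suppose that $e_{s}(T_{i})\leq (m/s)^{\alpha}$ for all $i,s\in\{1,\dots,m\}$. Let $T:l_{p}^{m}(\{X_{i}\}_{i=1}^m)\rightarrow l_{q}^{m}(\{Y_{i}\}_{i=1}^m)$ be the linear operator $T(x)=(T_{1}(x_{1}),\dots,T_{m}(x_{m}))$ for $x=(x_{1},\dots,x_{m})\in X_1\times\dots\times X_m$. Then $e_{5m}(T)\leq 3^{1/q}$.
   Context: For quasi-Banach spaces $X_1,\dots,X_m$ and $0<p\le\infty$, $l_p^m(\{X_i\}_{i=1}^m)$ is the space of tuples $x=(x_1,\dots,x_m)$, $x_i\in X_i$, with quasi-norm $(\sum_{i=1}^m\|x_i\|_{X_i}^p)^{1/p}$ (and $\max_i\|x_i\|_{X_i}$ if $p=\infty$). For a bounded linear operator $S:X\to Y$ between quasi-Banach spaces and $n\in\mathbb{N}$, the entropy number $e_n(S)$ is the infimum of $\varepsilon>0$ such that $S(B_X)$ ($B_X$ the closed unit ball of $X$) can be covered by $2^{n-1}$ balls in $Y$ of radius $\varepsilon$. Convention $3^{1/\infty}=1$. *)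

theory Defs
  imports "HOL-Analysis.Analysis"
begin

definition quasi_normed :: "'a::real_vector set \<Rightarrow> ('a \<Rightarrow> real) \<Rightarrow> bool" where
  "quasi_normed V N \<longleftrightarrow> subspace V \<and>
     (\<forall>x\<in>V. 0 \<le> N x) \<and> (\<forall>x\<in>V. N x = 0 \<longleftrightarrow> x = 0) \<and>
     (\<forall>x\<in>V. \<forall>c. N (c *\<^sub>R x) = \<bar>c\<bar> * N x) \<and>
     (\<exists>K\<ge>1. \<forall>x\<in>V. \<forall>y\<in>V. N (x + y) \<le> K * (N x + N y))"

definition quasi_banach :: "'a::real_vector set \<Rightarrow> ('a \<Rightarrow> real) \<Rightarrow> bool" where
  "quasi_banach V N \<longleftrightarrow> quasi_normed V N \<and>
     (\<forall>f. (\<forall>n. f n \<in> V) \<and> (\<forall>e>0. \<exists>K. \<forall>i j. K \<le> i \<and> K \<le> j \<longrightarrow> N (f i - f j) < e)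
          \<longrightarrow> (\<exists>x\<in>V. (\<lambda>n. N (f n - x)) \<longlonglongrightarrow> 0))"

definition bounded_linear_op ::
  "'a::real_vector set \<Rightarrow> ('a \<Rightarrow> real) \<Rightarrow> 'b::real_vector set \<Rightarrow> ('b \<Rightarrow> real) \<Rightarrow> ('a \<Rightarrow> 'b) \<Rightarrow> bool" where
  "bounded_linear_op V N W M S \<longleftrightarrow> (\<forall>x\<in>V. S x \<in> W) \<and>
     (\<forall>x\<in>V. \<forall>y\<in>V. S (x + y) = S x + S y) \<and> (\<forall>x\<in>V. \<forall>c. S (c *\<^sub>R x) = c *\<^sub>R S x) \<and>
     (\<exists>C. \<forall>x\<in>V. M (S x) \<le> C * N x)"

definition entropy_number ::
  "'a set \<Rightarrow> ('a \<Rightarrow> real) \<Rightarrow> 'b::minus set \<Rightarrow> ('b \<Rightarrow> real) \<Rightarrow> ('a \<Rightarrow> 'b) \<Rightarrow> nat \<Rightarrow> real" where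
  "entropy_number V N W M S n = Inf {eps. eps > 0 \<and>
     (\<exists>C. finite C \<and> card C \<le> 2 ^ (n - 1) \<and> C \<subseteq> W \<and>
          S ` {x\<in>V. N x \<le> 1} \<subseteq> (\<Union>c\<in>C. {y\<in>W. M (y - c) \<le> eps}))}"

definition lp_carrier :: "nat \<Rightarrow> (nat \<Rightarrow> 'a::zero set) \<Rightarrow> (nat \<Rightarrow> 'a) set" where
  "lp_carrier m V = {x. (\<forall>i\<in>{1..m}. x i \<in> V i) \<and> (\<forall>i. i \<notin> {1..m} \<longrightarrow> x i = 0)}"

definition lp_qnorm :: "ereal \<Rightarrow> nat \<Rightarrow> (nat \<Rightarrow> 'a \<Rightarrow> real) \<Rightarrow> (nat \<Rightarrow> 'a) \<Rightarrow> real" where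
  "lp_qnorm r m N x = (if r = \<infinity> then Max ((\<lambda>i. N i (x i)) ` {1..m})
     else (\<Sum>i=1..m. N i (x i) powr real_of_ereal r) powr (1 / real_of_ereal r))"

definition inv_exp :: "ereal \<Rightarrow> real" where
  "inv_exp r = (if r = \<infinity> then 0 else 1 / real_of_ereal r)"

end

theory Submission
  imports Defs
begin

lemma geom_half: "(\<Sum>k=1..n. (1/2::real)^k) = 1 - (1/2)^n"
  by (induction n) (auto simp: sum.atLeast1_atMost_eq)

lemma geom_half_le: "(\<Sum>k=1..n. (1/2::real)^k) \<le> 1"
  unfolding geom_half by simp

lemma card_S_bound:
  fixes m :: nat
  defines "S \<equiv> {s \<in> PiE {1..m} (\<lambda>_. {1..m}). (\<Sum>i=1..m. s i) \<le> 2*m}"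
  shows "card S \<le> 4^m"
proof -
  have finP: "finite (PiE {1..m} (\<lambda>_. {1..m::nat}))" by (simp add: finite_PiE)
  have fin: "finite S" unfolding S_def using finP by simp
  have "real (card S) = (\<Sum>s\<in>S. 1)" by simp
  also have "\<dots> \<le> (\<Sum>s\<in>S. 4^m * (\<Prod>i\<in>{1..m}. (1/2::real)^(s i)))"
  proof (rule sum_mono)
    fix s assume "s \<in> S"
    hence le: "(\<Sum>i=1..m. s i) \<le> 2*m" unfolding S_def by auto
    have "(\<Prod>i\<in>{1..m}. (1/2::real)^(s i)) = (1/2)^(\<Sum>i=1..m. s i)" by (simp add: power_sum)
    also have "\<dots> \<ge> (1/2)^(2*m)" by (rule power_decreasing[OF le]) auto
    finally have "(\<Prod>i\<in>{1..m}. (1/2::real)^(s i)) \<ge> (1/4)^m" by (simp add: power_mult power2_eq_square)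
    hence "4^m * (\<Prod>i\<in>{1..m}. (1/2::real)^(s i)) \<ge> 4^m * (1/4)^m" by simp
    thus "1 \<le> 4^m * (\<Prod>i\<in>{1..m}. (1/2::real)^(s i))" by (simp add: power_mult_distrib[symmetric])
  qed
  also have "\<dots> \<le> (\<Sum>s\<in>PiE {1..m} (\<lambda>_. {1..m}). 4^m * (\<Prod>i\<in>{1..m}. (1/2::real)^(s i)))"
    by (rule sum_mono2[OF finP]) (auto simp: S_def intro!: prod_nonneg mult_nonneg_nonneg)
  also have "\<dots> = 4^m * (\<Prod>i\<in>{1..m}. \<Sum>k\<in>{1..m}. (1/2::real)^k)"
    using prod_sum_PiE[of "{1..m}" "\<lambda>_. {1..m::nat}" "\<lambda>i k. (1/2::real)^k", symmetric]
    by (simp add: sum_distrib_left[symmetric] del: prod_constant)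
  also have "\<dots> \<le> 4^m * 1"
    by (rule mult_left_mono, rule prod_le_1) (use geom_half_le in \<open>auto intro: sum_nonneg\<close>)
  finally show ?thesis by (metis mult_1_right of_nat_le_iff of_nat_numeral of_nat_power)
qed

lemma inf_le_scaled:
  fixes X :: "real set"
  assumes pos: "\<And>x. x\<in>X \<Longrightarrow> x>0" and B: "B>0" and mem: "\<And>d. d>0 \<Longrightarrow> (1+d)*B \<in> X"
  shows "Inf X \<le> B"
proof (rule ccontr)
  assume "\<not> Inf X \<le> B"
  hence gt: "Inf X > B" by simp
  define d where "d = (Inf X - B)/(2*B)"
  have d: "d > 0" using gt B by (simp add: d_def)
  have bdd: "bdd_below X" by (rule bdd_belowI[where m=0]) (simp add: less_imp_le pos)
  have "Inf X \<le> (1+d)*B" using cInf_lower[OF mem[OF d] bdd] .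
  also have "(1+d)*B = B + (Inf X - B)/2" using B by (simp add: d_def field_simps)
  finally have "Inf X \<le> B + (Inf X - B)/2" .
  thus False using gt by (simp add: field_simps)
qed

lemma qn_nonneg: "quasi_normed V N \<Longrightarrow> x\<in>V \<Longrightarrow> 0 \<le> N x"
  unfolding quasi_normed_def by simp
lemma qn_hom: "quasi_normed V N \<Longrightarrow> x\<in>V \<Longrightarrow> N (c *\<^sub>R x) = \<bar>c\<bar> * N x"
  unfolding quasi_normed_def by simp
lemma qn_sub: "quasi_normed V N \<Longrightarrow> subspace V"
  unfolding quasi_normed_def by simp
lemma qb_qn: "quasi_banach V N \<Longrightarrow> quasi_normed V N"
  unfolding quasi_banach_def by simp
lemma blo_in: "bounded_linear_op V N W M S \<Longrightarrow> x\<in>V \<Longrightarrow> S x \<in> W"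
  unfolding bounded_linear_op_def by simp
lemma blo_scale: "bounded_linear_op V N W M S \<Longrightarrow> x\<in>V \<Longrightarrow> S (c *\<^sub>R x) = c *\<^sub>R S x"
  unfolding bounded_linear_op_def by simp

lemma entropy_cover:
  assumes V: "quasi_normed V N" and W: "quasi_normed W M" and S: "bounded_linear_op V N W M S"
    and lt: "entropy_number V N W M S n < z"
  shows "\<exists>eps C. eps>0 \<and> eps < z \<and> finite C \<and> card C \<le> 2^(n-1) \<and> C \<subseteq> W \<and>
     S ` {x\<in>V. N x \<le> 1} \<subseteq> (\<Union>c\<in>C. {y\<in>W. M (y - c) \<le> eps})"
proof -
  let ?X = "{eps. eps > 0 \<and>
     (\<exists>C. finite C \<and> card C \<le> 2 ^ (n - 1) \<and> C \<subseteq> W \<and>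
          S ` {x\<in>V. N x \<le> 1} \<subseteq> (\<Union>c\<in>C. {y\<in>W. M (y - c) \<le> eps}))}"
  have "\<exists>K. \<forall>x\<in>V. M (S x) \<le> K * N x" using S unfolding bounded_linear_op_def by simp
  then obtain K where K: "\<And>x. x\<in>V \<Longrightarrow> M (S x) \<le> K * N x" by blast
  have SW: "\<And>x. x\<in>V \<Longrightarrow> S x \<in> W" using blo_in[OF S] .
  have N0: "\<And>x. x\<in>V \<Longrightarrow> 0 \<le> N x" using qn_nonneg[OF V] .
  have W0: "0 \<in> W" using qn_sub[OF W] by (rule subspace_0)
  have cov: "S ` {x\<in>V. N x \<le> 1} \<subseteq> (\<Union>c\<in>{0}. {y\<in>W. M (y - c) \<le> max 1 K})"
  proof
    fix y assume "y \<in> S ` {x\<in>V. N x \<le> 1}"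
    then obtain x where x: "x\<in>V" "N x \<le> 1" "y = S x" by blast
    have "K * N x \<le> max 1 K"
    proof (cases "K \<ge> 0")
      case True thus ?thesis using x N0[OF x(1)] by (metis mult_left_le max.coboundedI2)
    next
      case False thus ?thesis using N0[OF x(1)] mult_nonpos_nonneg[of K "N x"] by linarith
    qed
    hence "M (y - 0) \<le> max 1 K" using K[OF x(1)] x(3) by simp
    moreover have "y \<in> W" using SW[OF x(1)] x(3) by simp
    ultimately show "y \<in> (\<Union>c\<in>{0}. {y\<in>W. M (y - c) \<le> max 1 K})" by simp
  qed
  have ex1: "\<exists>C. finite C \<and> card C \<le> 2 ^ (n - 1) \<and> C \<subseteq> W \<and>
          S ` {x\<in>V. N x \<le> 1} \<subseteq> (\<Union>c\<in>C. {y\<in>W. M (y - c) \<le> max 1 K})"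
    apply (rule exI[of _ "{0}"])
    apply (rule conjI, simp)
    apply (rule conjI, simp)
    apply (rule conjI, simp add: W0)
    by (rule cov)
  have "max 1 K \<in> ?X"
    apply (rule CollectI)
    apply (rule conjI, simp)
    by (rule ex1)
  hence ne: "?X \<noteq> {}" by (metis empty_iff)
  from cInf_lessD[OF ne lt[unfolded entropy_number_def]]
  obtain eps where e1: "eps \<in> ?X" and e2: "eps < z" by (elim bexE)
  from e1 have e3: "eps > 0" and "\<exists>C. finite C \<and> card C \<le> 2 ^ (n - 1) \<and> C \<subseteq> W \<and>
          S ` {x\<in>V. N x \<le> 1} \<subseteq> (\<Union>c\<in>C. {y\<in>W. M (y - c) \<le> eps})"
    by (simp_all only: mem_Collect_eq)
  then obtain C where "finite C \<and> card C \<le> 2 ^ (n - 1) \<and> C \<subseteq> W \<and>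
          S ` {x\<in>V. N x \<le> 1} \<subseteq> (\<Union>c\<in>C. {y\<in>W. M (y - c) \<le> eps})" by (elim exE)
  then show ?thesis using e2 e3 by (intro exI[of _ eps] exI[of _ C]) simp
qed

lemma round_lemma:
  fixes x :: real
  assumes "0 \<le> x" "x \<le> real m" "m \<ge> 1"
  shows "max 1 (nat \<lceil>x\<rceil>) \<in> {1..m}" "real (max 1 (nat \<lceil>x\<rceil>)) \<le> x + 1"
    "x \<le> real (max 1 (nat \<lceil>x\<rceil>))"
proof -
  define c where "c = \<lceil>x\<rceil>"
  have c0: "c \<ge> 0" unfolding c_def using assms(1) by simp
  have cm: "c \<le> int m" unfolding c_def ceiling_le_iff using assms(2) by simp
  have rc: "real_of_int c < x + 1" "x \<le> real_of_int c" unfolding c_def using ceiling_correct[of x] by auto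
  have nc: "real (nat c) = real_of_int c" using c0 by simp
  show "max 1 (nat \<lceil>x\<rceil>) \<in> {1..m}" unfolding c_def[symmetric] using cm assms(3) by auto
  show "real (max 1 (nat \<lceil>x\<rceil>)) \<le> x + 1" unfolding c_def[symmetric] using nc rc assms(1)
    by (simp add: of_nat_max)
  show "x \<le> real (max 1 (nat \<lceil>x\<rceil>))" unfolding c_def[symmetric] using nc rc
    by (simp add: of_nat_max)
qed

lemma powr_cancel:
  fixes a b :: real
  assumes "a>0" "b>0"
  shows "(a/b) powr u * (b/a) powr (u - v) = (a/b) powr v"
  using assms by (simp add: powr_divide powr_diff field_simps powr_add[symmetric])

lemma sum_le_one_each:
  fixes r :: "nat \<Rightarrow> real"
  assumes "finite A" "\<And>i. i\<in>A \<Longrightarrow> 0 \<le> r i" "sum r A \<le> 1" "i \<in> A"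
  shows "r i \<le> 1"
  using member_le_sum[of i A r] assms by auto

theorem lemma2p3:
  fixes m :: nat and p q :: ereal
    and VX :: "nat \<Rightarrow> 'a::real_vector set" and NX :: "nat \<Rightarrow> 'a \<Rightarrow> real"
    and VY :: "nat \<Rightarrow> 'b::real_vector set" and NY :: "nat \<Rightarrow> 'b \<Rightarrow> real"
    and Tc :: "nat \<Rightarrow> 'a \<Rightarrow> 'b"
  assumes m: "m \<ge> 2"
    and p: "0 < p" and pq: "p < q"
    and X: "\<And>i. i \<in> {1..m} \<Longrightarrow> quasi_banach (VX i) (NX i)"
    and Y: "\<And>i. i \<in> {1..m} \<Longrightarrow> quasi_banach (VY i) (NY i)"
    and T: "\<And>i. i \<in> {1..m} \<Longrightarrow> bounded_linear_op (VX i) (NX i) (VY i) (NY i) (Tc i)"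
    and ent: "\<And>i s. i \<in> {1..m} \<Longrightarrow> s \<in> {1..m} \<Longrightarrow>
       entropy_number (VX i) (NX i) (VY i) (NY i) (Tc i) s
         \<le> (real m / real s) powr (inv_exp p - inv_exp q)"
  shows "entropy_number (lp_carrier m VX) (lp_qnorm p m NX) (lp_carrier m VY) (lp_qnorm q m NY)
           (\<lambda>x i. if i \<in> {1..m} then Tc i (x i) else 0) (5 * m)
         \<le> (if q = \<infinity> then 1 else 3 powr inv_exp q)"
proof -
  define pr where "pr = real_of_ereal p"
  have pfin1: "p = ereal pr" unfolding pr_def using p pq by (cases p) auto
  have pfin2: "pr > 0" unfolding pr_def using p pq by (cases p) auto
  note pfin = pfin1 pfin2
  have ip: "inv_exp p = 1/pr" using pfin by (simp add: inv_exp_def)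
  define iq where "iq = inv_exp q"
  define B where "B = (if q = \<infinity> then 1 else 2 powr iq)"
  have q0: "q > 0" using p pq by simp
  have iq0: "iq \<ge> 0" unfolding iq_def inv_exp_def using q0 by (cases q) auto
  have Bpos: "B > 0" unfolding B_def by auto
  have Bbound: "B \<le> (if q = \<infinity> then 1 else 3 powr inv_exp q)"
    unfolding B_def iq_def[symmetric] using iq0 by (auto intro: powr_mono2)
  have m1: "m \<ge> 1" "real m > 0" using m by auto
  have XN: "quasi_normed (VX i) (NX i)" if "i\<in>{1..m}" for i using qb_qn[OF X[OF that]] .
  have YN: "quasi_normed (VY i) (NY i)" if "i\<in>{1..m}" for i using qb_qn[OF Y[OF that]] .
  have XN0: "0 \<le> NX i x" if "i\<in>{1..m}" "x \<in> VX i" for i x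
    using qn_nonneg[OF XN[OF that(1)] that(2)] .
  have YN0: "0 \<le> NY i x" if "i\<in>{1..m}" "x \<in> VY i" for i x
    using qn_nonneg[OF YN[OF that(1)] that(2)] .
  have XH: "NX i (c *\<^sub>R x) = \<bar>c\<bar> * NX i x" if "i\<in>{1..m}" "x \<in> VX i" for i x c
    using qn_hom[OF XN[OF that(1)] that(2)] .
  have YH: "NY i (c *\<^sub>R x) = \<bar>c\<bar> * NY i x" if "i\<in>{1..m}" "x \<in> VY i" for i x c
    using qn_hom[OF YN[OF that(1)] that(2)] .
  have XS: "subspace (VX i)" if "i\<in>{1..m}" for i
    using qn_sub[OF XN[OF that(1)]] .
  have YS: "subspace (VY i)" if "i\<in>{1..m}" for i
    using qn_sub[OF YN[OF that(1)]] .
  have TV: "Tc i x \<in> VY i" if "i\<in>{1..m}" "x \<in> VX i" for i x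
    using blo_in[OF T[OF that(1)] that(2)] .
  have TL: "Tc i (c *\<^sub>R x) = c *\<^sub>R Tc i x" if "i\<in>{1..m}" "x \<in> VX i" for i x c
    using blo_scale[OF T[OF that(1)] that(2)] .
  define b where "b k = (real m / real k) powr (inv_exp p - inv_exp q)" for k :: nat
  define t where "t k = (real k / real m) powr (1/pr)" for k :: nat
  have tb: "t k * b k = (real k / real m) powr iq" if "k \<ge> 1" for k
    unfolding t_def b_def ip iq_def[symmetric] using that m1
    by (intro powr_cancel) auto
  have tpos: "t k > 0" if "k \<ge> 1" for k unfolding t_def using that m1 by simp
  let ?X = "{eps. eps > 0 \<and>
     (\<exists>C. finite C \<and> card C \<le> 2 ^ (5 * m - 1) \<and> C \<subseteq> lp_carrier m VY \<and>
          (\<lambda>x i. if i \<in> {1..m} then Tc i (x i) else 0) ` {x\<in>lp_carrier m VX. lp_qnorm p m NX x \<le> 1}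
          \<subseteq> (\<Union>c\<in>C. {y\<in>lp_carrier m VY. lp_qnorm q m NY (y - c) \<le> eps}))}"
  have "Inf ?X \<le> B"
  proof (rule inf_le_scaled)
    show "\<And>x. x \<in> ?X \<Longrightarrow> x > 0" by simp
    show "B > 0" by (rule Bpos)
    fix d :: real assume d: "d > 0"
    define \<Phi> where "\<Phi> i k e C \<longleftrightarrow> e > 0 \<and> e < (1+d) * b k \<and> finite C \<and> card C \<le> 2^(k-1) \<and> C \<subseteq> VY i \<and>
        Tc i ` {x\<in>VX i. NX i x \<le> 1} \<subseteq> (\<Union>c\<in>C. {y\<in>VY i. NY i (y - c) \<le> e})" for i k e C
    have bpos: "b k > 0" if "k \<ge> 1" for k unfolding b_def using that m1 by simp
    have ex: "\<exists>ec. \<Phi> i k (fst ec) (snd ec)" if i: "i\<in>{1..m}" and k: "k\<in>{1..m}" for i k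
    proof -
      have "entropy_number (VX i) (NX i) (VY i) (NY i) (Tc i) k \<le> b k"
        using ent[OF i k] unfolding b_def .
      also have "b k < (1+d) * b k" using bpos[of k] k d by simp
      finally have "entropy_number (VX i) (NX i) (VY i) (NY i) (Tc i) k < (1+d) * b k" .
      from entropy_cover[OF XN[OF i] YN[OF i] T[OF i] this]
      have "\<exists>e C. \<Phi> i k e C" unfolding \<Phi>_def .
      then obtain e C where "\<Phi> i k e C" by blast
      thus ?thesis by (intro exI[of _ "(e, C)"]) simp
    qed
    define ec where "ec i k = (SOME ec. \<Phi> i k (fst ec) (snd ec))" for i k
    define E where "E i k = fst (ec i k)" for i k
    define Cf where "Cf i k = snd (ec i k)" for i k
    have \<Phi>E: "\<Phi> i k (E i k) (Cf i k)" if "i\<in>{1..m}" "k\<in>{1..m}" for i k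
      unfolding E_def Cf_def ec_def using someI_ex[OF ex[OF that]] .
    define S where "S = {s \<in> PiE {1..m} (\<lambda>_. {1..m}). (\<Sum>i=1..m. s i) \<le> 2*m}"
    define cent where "cent s g = (\<lambda>i. if i \<in> {1..m} then t (s i) *\<^sub>R g i else 0)"
      for s :: "nat \<Rightarrow> nat" and g :: "nat \<Rightarrow> 'b"
    define CC where "CC = (\<Union>s\<in>S. cent s ` PiE {1..m} (\<lambda>i. Cf i (s i)))"
    have finS: "finite S" unfolding S_def by (rule finite_subset[of _ "PiE {1..m} (\<lambda>_. {1..m})"]) (auto simp: finite_PiE)
    have sS: "s i \<in> {1..m}" if "s \<in> S" "i \<in> {1..m}" for s i using that unfolding S_def by auto
    have finCf: "finite (Cf i k)" if "i\<in>{1..m}" "k\<in>{1..m}" for i k using \<Phi>E[OF that] unfolding \<Phi>_def by (elim conjE) assumption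
    have cardCf: "card (Cf i k) \<le> 2^k" if "i\<in>{1..m}" "k\<in>{1..m}" for i k
    proof -
      have "card (Cf i k) \<le> 2^(k-1)" using \<Phi>E[OF that] unfolding \<Phi>_def by (elim conjE) assumption
      also have "\<dots> \<le> 2^k" by (rule power_increasing) auto
      finally show ?thesis .
    qed
    have subCf: "Cf i k \<subseteq> VY i" if "i\<in>{1..m}" "k\<in>{1..m}" for i k using \<Phi>E[OF that] unfolding \<Phi>_def by (elim conjE) assumption
    have finCs: "finite (Cf i (s i))" if "s \<in> S" "i\<in>{1..m}" for s i using finCf[OF that(2) sS[OF that]] .
    have cardCs: "card (Cf i (s i)) \<le> 2 ^ (s i)" if "s \<in> S" "i\<in>{1..m}" for s i using cardCf[OF that(2) sS[OF that]] .
    have finPi: "finite (PiE {1..m} (\<lambda>i. Cf i (s i)))" if "s \<in> S" for s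
      by (rule finite_PiE) (simp_all add: finCs[OF that])
    have finCC: "finite CC" unfolding CC_def
      using finS finPi by simp
    have "card CC \<le> (\<Sum>s\<in>S. card (cent s ` PiE {1..m} (\<lambda>i. Cf i (s i))))"
      unfolding CC_def by (rule card_UN_le[OF finS])
    also have "\<dots> \<le> (\<Sum>s\<in>S. card (PiE {1..m} (\<lambda>i. Cf i (s i))))"
      by (rule sum_mono, rule card_image_le, rule finPi)
    also have "\<dots> = (\<Sum>s\<in>S. \<Prod>i\<in>{1..m}. card (Cf i (s i)))"
      by (simp add: card_PiE)
    also have "\<dots> \<le> (\<Sum>s\<in>S. \<Prod>i\<in>{1..m}. 2 ^ (s i))"
      by (intro sum_mono prod_mono conjI) (simp_all add: cardCs)
    also have "\<dots> = (\<Sum>s\<in>S. 2 ^ (\<Sum>i=1..m. s i))"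
      by (simp add: power_sum)
    also have "\<dots> \<le> (\<Sum>s\<in>S. 2 ^ (2*m))"
      by (intro sum_mono power_increasing) (auto simp: S_def)
    also have "\<dots> = card S * 4^m" by (simp add: power_mult)
    also have "\<dots> \<le> 4^m * 4^m" using card_S_bound[of m] unfolding S_def by simp
    also have "\<dots> = 2^(4*m)" by (simp add: power_mult power_mult_distrib[symmetric])
    also have "\<dots> \<le> 2^(5*m-1)" using m1 by (intro power_increasing) auto
    finally have cardCC: "card CC \<le> 2^(5*m-1)" .
    have subCC: "CC \<subseteq> lp_carrier m VY"
    proof
      fix c assume "c \<in> CC"
      then obtain s g where sg: "s \<in> S" "g \<in> PiE {1..m} (\<lambda>i. Cf i (s i))" "c = cent s g"
        unfolding CC_def by blast
      have "t (s i) *\<^sub>R g i \<in> VY i" if "i \<in> {1..m}" for i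
      proof -
        have "g i \<in> VY i" using subCf[OF that sS[OF sg(1) that]] PiE_mem[OF sg(2) that] by (rule subsetD)
        thus ?thesis by (rule subspace_scale[OF YS[OF that]])
      qed
      thus "c \<in> lp_carrier m VY" unfolding lp_carrier_def sg(3) cent_def by auto
    qed
    have cover: "(\<lambda>x i. if i \<in> {1..m} then Tc i (x i) else 0) ` {x\<in>lp_carrier m VX. lp_qnorm p m NX x \<le> 1}
          \<subseteq> (\<Union>c\<in>CC. {y\<in>lp_carrier m VY. lp_qnorm q m NY (y - c) \<le> (1+d)*B})"
    proof
      fix y assume "y \<in> (\<lambda>x i. if i \<in> {1..m} then Tc i (x i) else 0) ` {x\<in>lp_carrier m VX. lp_qnorm p m NX x \<le> 1}"
      then obtain x where xc: "x \<in> lp_carrier m VX" and xn: "lp_qnorm p m NX x \<le> 1"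
        and yx: "y = (\<lambda>i. if i \<in> {1..m} then Tc i (x i) else 0)" by blast
      have xi: "x i \<in> VX i" if "i\<in>{1..m}" for i using xc that unfolding lp_carrier_def by blast
      define r where "r i = NX i (x i) powr pr" for i
      have r0: "0 \<le> r i" for i unfolding r_def by simp
      have sumr: "(\<Sum>i=1..m. r i) \<le> 1"
      proof -
        define \<sigma> where "\<sigma> = (\<Sum>i=1..m. r i)"
        have "lp_qnorm p m NX x = \<sigma> powr (1/pr)" unfolding lp_qnorm_def r_def \<sigma>_def using pfin by simp
        hence le: "\<sigma> powr (1/pr) \<le> 1" using xn by simp
        have \<sigma>0: "\<sigma> \<ge> 0" unfolding \<sigma>_def by (rule sum_nonneg) (simp add: r0)
        have "\<sigma> = (\<sigma> powr (1/pr)) powr pr" using pfin(2) \<sigma>0 by (simp add: powr_powr)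
        also have "\<dots> \<le> 1 powr pr" by (rule powr_mono2) (use pfin(2) le in auto)
        finally show ?thesis unfolding \<sigma>_def by simp
      qed
      have r1: "r i \<le> 1" if "i \<in> {1..m}" for i
        using sum_le_one_each[of "{1..m}" r i] r0 sumr that by simp
      define sv where "sv i = max 1 (nat \<lceil>r i * real m\<rceil>)" for i
      have rm: "0 \<le> r i * real m" "r i * real m \<le> real m" if "i\<in>{1..m}" for i
        using r0[of i] r1[OF that] m1 by (simp_all add: mult_le_cancel_right1)
      have sv_rng: "sv i \<in> {1..m}" if "i\<in>{1..m}" for i
        unfolding sv_def using round_lemma(1)[OF rm[OF that] m1(1)] .
      have sv_up: "real (sv i) \<le> r i * real m + 1" if "i\<in>{1..m}" for i
        unfolding sv_def using round_lemma(2)[OF rm[OF that] m1(1)] .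
      have sv_low: "r i * real m \<le> real (sv i)" if "i\<in>{1..m}" for i
        unfolding sv_def using round_lemma(3)[OF rm[OF that] m1(1)] .
      have sumsv: "(\<Sum>i=1..m. sv i) \<le> 2*m"
      proof -
        have "real (\<Sum>i=1..m. sv i) = (\<Sum>i=1..m. real (sv i))" by simp
        also have "\<dots> \<le> (\<Sum>i=1..m. r i * real m + 1)" by (rule sum_mono) (rule sv_up)
        also have "\<dots> = (\<Sum>i=1..m. r i) * real m + real m" by (simp add: sum.distrib sum_distrib_right)
        also have "\<dots> \<le> 1 * real m + real m" using sumr m1 by (intro add_right_mono mult_right_mono) auto
        also have "\<dots> = real (2*m)" by simp
        finally have "real (\<Sum>i=1..m. sv i) \<le> real (2*m)" .
        thus ?thesis by (simp only: of_nat_le_iff)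
      qed
      define s where "s = restrict sv {1..m}"
      have si: "s i = sv i" if "i\<in>{1..m}" for i using that unfolding s_def by simp
      have sS': "s \<in> S"
      proof -
        have "s \<in> PiE {1..m} (\<lambda>_. {1..m})" unfolding s_def restrict_PiE_iff using sv_rng by blast
        moreover have "(\<Sum>i=1..m. s i) = (\<Sum>i=1..m. sv i)" by (rule sum.cong) (simp_all add: si)
        ultimately show ?thesis unfolding S_def using sumsv by simp
      qed
      have nx_le: "NX i (x i) \<le> t (sv i)" if "i\<in>{1..m}" for i
      proof -
        have "NX i (x i) = r i powr (1/pr)" unfolding r_def using XN0[OF that xi[OF that]] pfin(2)
          by (simp add: powr_powr)
        also have "\<dots> \<le> (real (sv i) / real m) powr (1/pr)"
          by (rule powr_mono2) (use pfin(2) r0 sv_low[OF that] m1 in \<open>auto simp: field_simps\<close>)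
        finally show ?thesis unfolding t_def .
      qed
      have good: "\<exists>c. c \<in> Cf i (sv i) \<and> NY i (Tc i (x i) - t (sv i) *\<^sub>R c) \<le> (1+d) * (real (sv i) / real m) powr iq"
        if i: "i\<in>{1..m}" for i
      proof -
        define k where "k = sv i"
        define tt where "tt = t k"
        have k: "k \<in> {1..m}" unfolding k_def by (rule sv_rng[OF i])
        have tt: "tt > 0" unfolding tt_def using tpos k by simp
        define z where "z = (1/tt) *\<^sub>R x i"
        have zV: "z \<in> VX i" unfolding z_def by (rule subspace_scale[OF XS[OF i] xi[OF i]])
        have zn: "NX i z \<le> 1" unfolding z_def using XH[OF i xi[OF i]] nx_le[OF i] tt
          unfolding tt_def k_def by (simp add: field_simps)
        have "Tc i z \<in> Tc i ` {x\<in>VX i. NX i x \<le> 1}" using zV zn by blast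
        moreover have "Tc i ` {x\<in>VX i. NX i x \<le> 1} \<subseteq> (\<Union>c\<in>Cf i k. {y\<in>VY i. NY i (y - c) \<le> E i k})"
          using \<Phi>E[OF i k] unfolding \<Phi>_def by (elim conjE) assumption
        ultimately obtain c where c: "c \<in> Cf i k" "NY i (Tc i z - c) \<le> E i k" by blast
        have Ek: "E i k < (1+d) * b k" using \<Phi>E[OF i k] unfolding \<Phi>_def by (elim conjE) assumption
        have cV: "c \<in> VY i" using subCf[OF i k] c(1) by (rule subsetD)
        have xz: "x i = tt *\<^sub>R z" unfolding z_def using tt by simp
        have "Tc i (x i) - tt *\<^sub>R c = tt *\<^sub>R (Tc i z - c)" unfolding xz TL[OF i zV] by (simp add: scaleR_diff_right)
        hence "NY i (Tc i (x i) - tt *\<^sub>R c) = tt * NY i (Tc i z - c)"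
          using YH[OF i subspace_diff[OF YS[OF i] TV[OF i zV] cV], of tt] tt by simp
        also have "\<dots> \<le> tt * ((1+d) * b k)" using c(2) Ek tt by (intro mult_left_mono) auto
        also have "\<dots> = (1+d) * (tt * b k)" by simp
        also have "\<dots> = (1+d) * (real k / real m) powr iq" unfolding tt_def using tb[of k] k by simp
        finally show ?thesis using c(1) unfolding tt_def k_def by blast
      qed
      hence "\<forall>i\<in>{1..m}. \<exists>c. c \<in> Cf i (sv i) \<and> NY i (Tc i (x i) - t (sv i) *\<^sub>R c) \<le> (1+d) * (real (sv i) / real m) powr iq"
        by blast
      from bchoice[OF this] obtain g where
        g: "\<forall>i\<in>{1..m}. g i \<in> Cf i (sv i) \<and> NY i (Tc i (x i) - t (sv i) *\<^sub>R g i) \<le> (1+d) * (real (sv i) / real m) powr iq"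
        by (elim exE)
      define g' where "g' = restrict g {1..m}"
      define cc where "cc = cent s g'"
      have g'P: "g' \<in> PiE {1..m} (\<lambda>i. Cf i (s i))" unfolding g'_def restrict_PiE_iff using g si by simp
      have ccCC: "cc \<in> CC" unfolding CC_def cc_def by (rule UN_I[OF sS'], rule imageI, rule g'P)
      have yW: "y \<in> lp_carrier m VY" unfolding yx lp_carrier_def using TV xi by auto
      have diff: "(y - cc) i = Tc i (x i) - t (sv i) *\<^sub>R g i" if "i\<in>{1..m}" for i
        unfolding yx cc_def cent_def g'_def using that si[OF that] by simp
      define e where "e i = NY i ((y - cc) i)" for i
      have e_le: "e i \<le> (1+d) * (real (sv i)/real m) powr iq" if "i\<in>{1..m}" for i
        unfolding e_def diff[OF that] using g that by blast
      have e0: "0 \<le> e i" if i: "i\<in>{1..m}" for i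
      proof -
        have gV: "g i \<in> VY i" using subCf[OF i sv_rng[OF i]] g i by blast
        show ?thesis unfolding e_def diff[OF i]
          by (rule YN0[OF i subspace_diff[OF YS[OF i] TV[OF i xi[OF i]] subspace_scale[OF YS[OF i] gV]]])
      qed
      have svpos: "real (sv i) / real m > 0" if "i\<in>{1..m}" for i using sv_rng[OF that] m1 by simp
      have qn: "lp_qnorm q m NY (y - cc) \<le> (1+d)*B"
      proof (cases "q = \<infinity>")
        case True
        then have iqz: "iq = 0" unfolding iq_def inv_exp_def by simp
        have "lp_qnorm q m NY (y - cc) = Max (e ` {1..m})" unfolding lp_qnorm_def e_def using True by simp
        also have "\<dots> \<le> 1 + d"
        proof (rule Max.boundedI)
          show "finite (e ` {1..m})" by simp
          show "e ` {1..m} \<noteq> {}" using m1 by simp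
          fix a assume "a \<in> e ` {1..m}"
          then obtain i where i: "i \<in> {1..m}" "a = e i" by blast
          have ne: "real (sv i)/real m \<noteq> 0" using svpos[OF i(1)] by linarith
          have p1: "(real (sv i)/real m) powr iq = 1" unfolding iqz powr_zero_eq_one using ne by (rule if_not_P)
          have "e i \<le> (1+d) * 1" using e_le[OF i(1)] unfolding p1 .
          thus "a \<le> 1 + d" using i(2) by simp
        qed
        finally show ?thesis using True unfolding B_def by simp
      next
        case False
        define qr where "qr = real_of_ereal q"
        have qfin1: "q = ereal qr" using False q0 unfolding qr_def by (cases q) auto
        have qfin2: "qr > 0" using False q0 unfolding qr_def by (cases q) auto
        have iqq: "iq = 1/qr" unfolding iq_def inv_exp_def qr_def using False by simp
        have "(\<Sum>i=1..m. ((1+d) * (real (sv i)/real m) powr iq) powr qr)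
             = (\<Sum>i=1..m. (1+d) powr qr * (real (sv i)/real m))"
        proof (rule sum.cong)
          fix i assume i: "i \<in> {1..m}"
          have "((1+d) * (real (sv i)/real m) powr iq) powr qr = (1+d) powr qr * ((real (sv i)/real m) powr iq) powr qr"
            using d by (simp add: powr_mult)
          also have "((real (sv i)/real m) powr iq) powr qr = real (sv i)/real m"
            using svpos[OF i] qfin2 by (simp add: powr_powr iqq)
          finally show "((1+d) * (real (sv i)/real m) powr iq) powr qr = (1+d) powr qr * (real (sv i)/real m)" .
        qed simp
        also have "\<dots> = (1+d) powr qr * (real (\<Sum>i=1..m. sv i) / real m)"
          by (simp add: sum_distrib_left sum_divide_distrib)
        also have "\<dots> \<le> (1+d) powr qr * 2"
        proof (rule mult_left_mono)
          have "real (\<Sum>i=1..m. sv i) \<le> real (2 * m)" using sumsv by (simp only: of_nat_le_iff)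
          hence "real (\<Sum>i=1..m. sv i) \<le> 2 * real m" by simp
          thus "real (\<Sum>i=1..m. sv i) / real m \<le> 2" using m1 by (simp add: divide_le_eq)
        qed simp
        finally have inner: "(\<Sum>i=1..m. ((1+d) * (real (sv i)/real m) powr iq) powr qr) \<le> (1+d) powr qr * 2" .
        have "lp_qnorm q m NY (y - cc) = (\<Sum>i=1..m. e i powr qr) powr (1/qr)"
          unfolding lp_qnorm_def e_def qr_def using False by simp
        also have "\<dots> \<le> (\<Sum>i=1..m. ((1+d) * (real (sv i)/real m) powr iq) powr qr) powr (1/qr)"
        proof (rule powr_mono2)
          show "0 \<le> 1/qr" using qfin2 by simp
          show "0 \<le> (\<Sum>i=1..m. e i powr qr)" by (rule sum_nonneg) simp
          show "(\<Sum>i=1..m. e i powr qr) \<le> (\<Sum>i=1..m. ((1+d) * (real (sv i)/real m) powr iq) powr qr)"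
            by (rule sum_mono, rule powr_mono2) (use qfin2 e0 e_le in auto)
        qed
        also have "\<dots> \<le> ((1+d) powr qr * 2) powr (1/qr)"
          by (rule powr_mono2) (use qfin2 inner in \<open>auto intro!: sum_nonneg\<close>)
        also have "\<dots> = (1+d) * 2 powr (1/qr)" using d qfin2 by (simp add: powr_mult powr_powr)
        finally show ?thesis unfolding B_def iqq using False by simp
      qed
      show "y \<in> (\<Union>c\<in>CC. {y\<in>lp_carrier m VY. lp_qnorm q m NY (y - c) \<le> (1+d)*B})"
        by (rule UN_I[OF ccCC]) (simp add: yW qn)
    qed
    have pos: "(1+d)*B > 0" using d Bpos by simp
    have exC: "\<exists>C. finite C \<and> card C \<le> 2 ^ (5 * m - 1) \<and> C \<subseteq> lp_carrier m VY \<and>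
          (\<lambda>x i. if i \<in> {1..m} then Tc i (x i) else 0) ` {x\<in>lp_carrier m VX. lp_qnorm p m NX x \<le> 1}
          \<subseteq> (\<Union>c\<in>C. {y\<in>lp_carrier m VY. lp_qnorm q m NY (y - c) \<le> (1+d)*B})"
      apply (rule exI[of _ CC])
      apply (rule conjI, rule finCC)
      apply (rule conjI, rule cardCC)
      apply (rule conjI, rule subCC)
      by (rule cover)
    from conjI[OF pos exC] show "(1+d)*B \<in> ?X" by (rule CollectI)
  qed
  note infB = this
  show ?thesis unfolding entropy_number_def by (rule order_trans[OF infB Bbound])
qed

end
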